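(* Let $E$ be a Dedekind complete Riesz space with conditional expectation operator $T$ and let $e$ be a weak order unit of $E$ with $Te=e$. If $(f_\alpha)_{\alpha\in\Lambda}$ is a $T$-uniform family in $E$, then the set $\{T|f_\alpha| : \alpha\in\Lambda\}$ is order bounded in $E$.
   Context: A conditional expectation operator on a Dedekind complete Riesz space $E$ with a weak order unit is a positive, order continuous linear projection $T:E\to E$ which maps weak order units to weak order units and whose range $\mathcal{R}(T)$ is a Dedekind complete Riesz subspace of $E$. For $u\in E$, $P_u$ denotes the band projection onto the band generated by $u$. A family $(f_\alpha)_{\alpha\in\Lambda}$ in $E$ is called $T$-uniform if $\sup\{T P_{(|f_\alpha|-ce)^+}|f_\alpha| : \alpha\in\Lambda\}$ (exists for all sufficiently large $c$ and) order converges to $0$ as $c\to\infty$. *)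

theory Defs
  imports Complex_Main
begin

text \<open>A Dedekind complete Riesz space: a lattice-ordered real vector space
(ordered_real_vector + lattice = Riesz space) in which every nonempty
subset that is bounded above has a supremum (conditionally complete lattice).\<close>
class dc_riesz_space = ordered_real_vector + conditionally_complete_lattice

definition rabs :: "'a::dc_riesz_space \<Rightarrow> 'a" where
  "rabs x = sup x (- x)"

definition rpos :: "'a::dc_riesz_space \<Rightarrow> 'a" where
  "rpos x = sup x 0"

definition rdisjoint :: "'a::dc_riesz_space \<Rightarrow> 'a \<Rightarrow> bool" where
  "rdisjoint x y \<longleftrightarrow> inf (rabs x) (rabs y) = 0"

text \<open>Band generated by u: the double disjoint complement of {u}
(which is the band generated by u in an Archimedean, in particular in a
Dedekind complete, Riesz space).\<close>
definition band_gen :: "'a::dc_riesz_space \<Rightarrow> 'a set" where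
  "band_gen u = {x. \<forall>y. rdisjoint y u \<longrightarrow> rdisjoint x y}"

text \<open>Band projection onto the band generated by u: P_u x is the component of x in
band_gen u in the decomposition E = B \<oplus> B^d.\<close>
definition band_proj :: "'a::dc_riesz_space \<Rightarrow> 'a \<Rightarrow> 'a" where
  "band_proj u x = (THE p. p \<in> band_gen u \<and> (\<forall>b\<in>band_gen u. rdisjoint (x - p) b))"

definition weak_order_unit :: "'a::dc_riesz_space \<Rightarrow> bool" where
  "weak_order_unit e \<longleftrightarrow> 0 \<le> e \<and> band_gen e = UNIV"

definition is_inf_of :: "'a::order set \<Rightarrow> 'a \<Rightarrow> bool" where
  "is_inf_of D l \<longleftrightarrow> (\<forall>x\<in>D. l \<le> x) \<and> (\<forall>y. (\<forall>x\<in>D. y \<le> x) \<longrightarrow> y \<le> l)"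

definition is_sup_of :: "'a::order set \<Rightarrow> 'a \<Rightarrow> bool" where
  "is_sup_of D s \<longleftrightarrow> (\<forall>x\<in>D. x \<le> s) \<and> (\<forall>y. (\<forall>x\<in>D. x \<le> y) \<longrightarrow> s \<le> y)"

definition down_directed :: "'a::order set \<Rightarrow> bool" where
  "down_directed D \<longleftrightarrow> D \<noteq> {} \<and> (\<forall>a\<in>D. \<forall>b\<in>D. \<exists>c\<in>D. c \<le> a \<and> c \<le> b)"

definition order_continuous :: "('a::dc_riesz_space \<Rightarrow> 'a) \<Rightarrow> bool" where
  "order_continuous T \<longleftrightarrow>
     (\<forall>D. down_directed D \<and> is_inf_of D 0 \<longrightarrow> is_inf_of (T ` D) 0)"

definition positive_op :: "('a::dc_riesz_space \<Rightarrow> 'a) \<Rightarrow> bool" where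
  "positive_op T \<longleftrightarrow> (\<forall>x. 0 \<le> x \<longrightarrow> 0 \<le> T x)"

definition riesz_subspace :: "'a::dc_riesz_space set \<Rightarrow> bool" where
  "riesz_subspace F \<longleftrightarrow> 0 \<in> F \<and> (\<forall>x\<in>F. \<forall>y\<in>F. x + y \<in> F) \<and>
     (\<forall>x\<in>F. \<forall>a::real. a *\<^sub>R x \<in> F) \<and> (\<forall>x\<in>F. \<forall>y\<in>F. sup x y \<in> F \<and> inf x y \<in> F)"

definition dedekind_complete_in :: "'a::order set \<Rightarrow> bool" where
  "dedekind_complete_in F \<longleftrightarrow>
     (\<forall>A\<subseteq>F. A \<noteq> {} \<and> (\<exists>b\<in>F. \<forall>x\<in>A. x \<le> b) \<longrightarrow>
        (\<exists>s\<in>F. (\<forall>x\<in>A. x \<le> s) \<and> (\<forall>y\<in>F. (\<forall>x\<in>A. x \<le> y) \<longrightarrow> s \<le> y)))"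

definition cond_exp_op :: "('a::dc_riesz_space \<Rightarrow> 'a) \<Rightarrow> bool" where
  "cond_exp_op T \<longleftrightarrow>
     positive_op T \<and> order_continuous T \<and> linear T \<and> (\<forall>x. T (T x) = T x) \<and>
     (\<forall>w. weak_order_unit w \<longrightarrow> weak_order_unit (T w)) \<and>
     riesz_subspace (range T) \<and> dedekind_complete_in (range T)"

definition order_conv_at_top :: "(real \<Rightarrow> 'a::dc_riesz_space) \<Rightarrow> 'a \<Rightarrow> bool" where
  "order_conv_at_top x l \<longleftrightarrow>
     (\<exists>p c0. (\<forall>c c'. c0 \<le> c \<longrightarrow> c \<le> c' \<longrightarrow> p c' \<le> p c) \<and> is_inf_of (p ` {c0..}) 0 \<and>
            (\<forall>c\<ge>c0. rabs (x c - l) \<le> p c))"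

definition T_uniform ::
  "('a::dc_riesz_space \<Rightarrow> 'a) \<Rightarrow> 'a \<Rightarrow> ('i \<Rightarrow> 'a) \<Rightarrow> 'i set \<Rightarrow> bool" where
  "T_uniform T e f \<Lambda> \<longleftrightarrow>
     (\<exists>g c0. (\<forall>c\<ge>c0. is_sup_of
                 {T (band_proj (rpos (rabs (f \<alpha>) - c *\<^sub>R e)) (rabs (f \<alpha>))) | \<alpha>. \<alpha> \<in> \<Lambda>} (g c))
            \<and> order_conv_at_top g 0)"

definition order_bounded :: "'a::order set \<Rightarrow> bool" where
  "order_bounded A \<longleftrightarrow> (\<exists>a b. \<forall>x\<in>A. a \<le> x \<and> x \<le> b)"

end

theory Submission imports Defs "HOL-Library.Lattice_Algebras" begin

instance dc_riesz_space \<subseteq> lattice_ab_group_add ..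

lemma rabs_nonneg: "0 \<le> rabs (x::'a::dc_riesz_space)"
proof -
  have "x + (-x) \<le> rabs x + rabs x" unfolding rabs_def by (intro add_mono) auto
  then show ?thesis by simp
qed

lemma rabs_id: "0 \<le> (x::'a::dc_riesz_space) \<Longrightarrow> rabs x = x"
  unfolding rabs_def by (simp add: sup_absorb1 order_trans[of "-x" 0 x])

lemma rabs_zero: "rabs (x::'a::dc_riesz_space) = 0 \<Longrightarrow> x = 0"
  unfolding rabs_def by simp

lemma rabs_diff: "rabs ((a::'a::dc_riesz_space) - b) \<le> rabs a + rabs b"
proof -
  have a: "a \<le> rabs a" "- a \<le> rabs a" and b: "b \<le> rabs b" "- b \<le> rabs b"
    by (simp_all add: rabs_def)
  have "a - b \<le> rabs a + rabs b" using add_mono[OF a(1) b(2)] by simp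
  moreover have "- (a - b) \<le> rabs a + rabs b" using add_mono[OF a(2) b(1)] by simp
  ultimately show ?thesis by (simp add: rabs_def)
qed

lemma inf_add_le:
  fixes z s t :: "'a::dc_riesz_space"
  assumes "0 \<le> z" "0 \<le> s" "0 \<le> t"
  shows "inf z (s+t) \<le> inf z s + inf z t"
proof -
  have "inf z s + inf z t = inf (inf z s + z) (inf z s + t)" by (rule add_inf_distrib_left)
  moreover have "inf z (s+t) \<le> inf z s + z" using assms by (simp add: add_increasing le_infI1)
  moreover have "inf z (s+t) \<le> inf (z+t) (s+t)" using assms by (auto intro: le_infI1 add_increasing2)
  moreover have "inf (z+t) (s+t) = inf z s + t" by (simp add: add_inf_distrib_right)
  ultimately show ?thesis by simp
qed

lemma disj_diff:
  fixes a b y :: "'a::dc_riesz_space"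
  assumes "rdisjoint a y" "rdisjoint b y"
  shows "rdisjoint (a - b) y"
proof -
  have "inf (rabs (a-b)) (rabs y) \<le> inf (rabs y) (rabs a + rabs b)"
    using rabs_diff[of a b] by (simp add: inf_commute le_infI2)
  also have "\<dots> \<le> inf (rabs y) (rabs a) + inf (rabs y) (rabs b)"
    by (rule inf_add_le) (auto simp: rabs_nonneg)
  also have "\<dots> = 0" using assms by (simp add: rdisjoint_def inf_commute)
  finally show ?thesis unfolding rdisjoint_def
    by (meson antisym le_infI rabs_nonneg)
qed

lemma disj_sym: "rdisjoint a b = rdisjoint b a"
  by (simp add: rdisjoint_def inf_commute)

lemma disj_self: "rdisjoint a a \<Longrightarrow> a = 0"
  by (simp add: rdisjoint_def rabs_zero)

lemma band_proj_unique:
  fixes x p1 p2 u :: "'a::dc_riesz_space"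
  assumes "p1 \<in> band_gen u" "\<forall>b\<in>band_gen u. rdisjoint (x - p1) b"
    "p2 \<in> band_gen u" "\<forall>b\<in>band_gen u. rdisjoint (x - p2) b"
  shows "p1 = p2"
proof -
  have d: "p1 - p2 \<in> band_gen u" using assms(1,3) unfolding band_gen_def
    by (auto intro: disj_diff)
  have "rdisjoint ((x - p2) - (x - p1)) (p1 - p2)"
    by (rule disj_diff) (use d assms in auto)
  then have "rdisjoint (p1 - p2) (p1 - p2)" by (simp add: algebra_simps)
  then show ?thesis using disj_self by force
qed

lemma archim:
  fixes w x :: "'a::dc_riesz_space"
  assumes "0 \<le> w" "\<And>n. real n *\<^sub>R w \<le> x"
  shows "w = 0"
proof -
  let ?S = "range (\<lambda>n. real n *\<^sub>R w)"
  have bdd: "bdd_above ?S" by (rule bdd_aboveI[of _ x]) (use assms(2) in auto)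
  have "Sup ?S \<le> Sup ?S - w"
  proof (rule cSup_least)
    show "?S \<noteq> {}" by auto
  next
    fix y assume "y \<in> ?S"
    then obtain n where y: "y = real n *\<^sub>R w" by auto
    have "real (Suc n) *\<^sub>R w \<le> Sup ?S" by (rule cSup_upper[OF rangeI bdd])
    then show "y \<le> Sup ?S - w" by (simp add: y scaleR_left_distrib algebra_simps)
  qed
  then have "w \<le> 0" by (simp add: le_diff_eq)
  then show ?thesis using assms(1) by simp
qed

lemma inf_sup_step:
  fixes z a p :: "'a::dc_riesz_space"
  assumes "a \<le> p"
  shows "inf z p \<le> inf z a + (p - a)"
proof -
  have "inf z a + (p - a) = inf (z + (p - a)) p" by (simp add: add_inf_distrib_right)
  moreover have "inf z p \<le> inf (z + (p - a)) p"
    using assms by (auto intro: le_infI1 simp: le_add_same_cancel1)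
  ultimately show ?thesis by simp
qed

lemma band_proj_exists:
  fixes x u :: "'a::dc_riesz_space"
  assumes x0: "0 \<le> x" and u0: "0 \<le> u"
  shows "\<exists>p. (p \<in> band_gen u \<and> (\<forall>b\<in>band_gen u. rdisjoint (x - p) b)) \<and> 0 \<le> p \<and> p \<le> x"
proof -
  define h where "h n = inf x (real n *\<^sub>R u)" for n
  define p where "p = Sup (range h)"
  have bdd: "bdd_above (range h)" by (auto simp: h_def intro!: bdd_aboveI[of _ x])
  have hp: "h n \<le> p" for n unfolding p_def by (rule cSup_upper[OF _ bdd]) auto
  have px: "p \<le> x" unfolding p_def by (rule cSup_least) (auto simp: h_def)
  have h0: "h 0 = 0" using x0 by (simp add: h_def inf_absorb2)
 have hn0: "0 \<le> h n" for n
    using x0 scaleR_nonneg_nonneg[OF of_nat_0_le_iff u0, of n] by (simp add: h_def)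
  have p0: "0 \<le> p" using hp[of 0] h0 by simp
  have ru: "rabs u = u" by (rule rabs_id[OF u0])
  have rp: "rabs p = p" by (rule rabs_id[OF p0])
  have inband: "p \<in> band_gen u"
    unfolding band_gen_def
  proof (intro CollectI allI impI)
    fix y assume "rdisjoint y u"
    then have yu: "inf (rabs y) u = 0" by (simp add: rdisjoint_def ru)
    have yn: "inf (rabs y) (real n *\<^sub>R u) = 0" for n
    proof (induction n)
      case 0 then show ?case using rabs_nonneg[of y] by (simp add: inf_absorb2)
    next
      case (Suc n)
      have "inf (rabs y) (real (Suc n) *\<^sub>R u) = inf (rabs y) (real n *\<^sub>R u + u)"
        by (simp add: scaleR_left_distrib algebra_simps)
      also have "\<dots> \<le> inf (rabs y) (real n *\<^sub>R u) + inf (rabs y) u"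
        by (rule inf_add_le) (auto simp: rabs_nonneg u0 intro: scaleR_nonneg_nonneg)
      finally have "inf (rabs y) (real (Suc n) *\<^sub>R u) \<le> 0" using Suc yu by simp
      moreover have "0 \<le> inf (rabs y) (real (Suc n) *\<^sub>R u)"
        using rabs_nonneg[of y] scaleR_nonneg_nonneg[OF of_nat_0_le_iff u0, of "Suc n"] le_infI by blast
      ultimately show ?case by (metis antisym)
    qed
    define w where "w = inf (rabs y) p"
    have w0: "0 \<le> w" using rabs_nonneg[of y] p0 by (simp add: w_def)
    have "p \<le> p - w"
      unfolding p_def
    proof (rule cSup_least)
      show "range h \<noteq> {}" by auto
    next
      fix a assume "a \<in> range h"
      then obtain n where a: "a = h n" by auto
      have "inf (rabs y) a \<le> inf (rabs y) (real n *\<^sub>R u)"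
        by (auto simp: a h_def intro: le_infI2)
      then have "inf (rabs y) a \<le> 0" using yn[of n] by simp
      moreover have "0 \<le> inf (rabs y) a" using rabs_nonneg[of y] hn0[of n] a by simp
      ultimately have "inf (rabs y) a = 0" by (rule antisym)
      moreover have "w \<le> inf (rabs y) a + (p - a)" unfolding w_def
        using hp a by (intro inf_sup_step) auto
      ultimately show "a \<le> Sup (range h) - w" by (simp add: p_def le_diff_eq algebra_simps)
    qed
    then have "w = 0" using w0 by (simp add: le_diff_eq)
    then show "rdisjoint p y" by (simp add: rdisjoint_def rp w_def inf_commute)
  qed
  define w where "w = inf (x - p) u"
  have w0: "0 \<le> w" using px u0 by (simp add: w_def)
  have wx: "w \<le> x - p" and wu: "w \<le> u" by (auto simp: w_def)
  have nw: "real n *\<^sub>R w \<le> h n" for n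
  proof (induction n)
    case 0 then show ?case by (simp add: h0)
  next
    case (Suc n)
    have "real (Suc n) *\<^sub>R w = real n *\<^sub>R w + w" by (simp add: scaleR_left_distrib algebra_simps)
    also have "\<dots> \<le> h n + w" using Suc by simp
    also have "h n + w \<le> h (Suc n)"
    proof -
      have "h n + w \<le> p + w" using hp[of n] by (rule add_right_mono)
      also have "p + w \<le> x" using wx by (simp add: le_diff_eq algebra_simps)
      finally have "h n + w \<le> x" .
      moreover have "h n + w \<le> real n *\<^sub>R u + u"
        using wu by (intro add_mono) (auto simp: h_def)
      ultimately show ?thesis by (simp add: h_def scaleR_left_distrib algebra_simps)
    qed
    finally show ?case .
  qed
  have "w = 0"
    by (rule archim[OF w0, of x]) (use nw in \<open>auto simp: h_def intro: order_trans\<close>)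
  then have xpu: "rdisjoint (x - p) u"
    using px by (simp add: rdisjoint_def ru rabs_id w_def)
  have "\<forall>b\<in>band_gen u. rdisjoint (x - p) b"
    using xpu by (auto simp: band_gen_def disj_sym)
  then show ?thesis using inband p0 px by blast
qed

lemma band_proj_props:
  fixes x u :: "'a::dc_riesz_space"
  assumes "0 \<le> x" "0 \<le> u"
  shows "band_proj u x \<in> band_gen u" "\<forall>b\<in>band_gen u. rdisjoint (x - band_proj u x) b"
    "0 \<le> band_proj u x" "band_proj u x \<le> x"
proof -
  obtain p where p: "p \<in> band_gen u" "\<forall>b\<in>band_gen u. rdisjoint (x - p) b" "0 \<le> p" "p \<le> x"
    using band_proj_exists[OF assms] by blast
  have "band_proj u x = p" unfolding band_proj_def
    by (rule the_equality) (use p band_proj_unique in blast)+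
  then show "band_proj u x \<in> band_gen u" "\<forall>b\<in>band_gen u. rdisjoint (x - band_proj u x) b"
    "0 \<le> band_proj u x" "band_proj u x \<le> x" using p by auto
qed
theorem lemma2p7:
  fixes T :: "'a::dc_riesz_space \<Rightarrow> 'a" and e :: 'a
    and f :: "'i \<Rightarrow> 'a" and \<Lambda> :: "'i set"
  assumes "cond_exp_op T"
    and "weak_order_unit e" and "T e = e"
    and "T_uniform T e f \<Lambda>"
  shows "order_bounded {T (rabs (f \<alpha>)) | \<alpha>. \<alpha> \<in> \<Lambda>}"
proof -
  have pos: "\<And>x. 0 \<le> x \<Longrightarrow> 0 \<le> T x" and lin: "linear T"
    using assms(1) by (auto simp: cond_exp_op_def positive_op_def)
  have e0: "0 \<le> e" using assms(2) by (simp add: weak_order_unit_def)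
  obtain g c0 where g: "\<forall>c\<ge>c0. is_sup_of
                 {T (band_proj (rpos (rabs (f \<alpha>) - c *\<^sub>R e)) (rabs (f \<alpha>))) | \<alpha>. \<alpha> \<in> \<Lambda>} (g c)"
    using assms(4) unfolding T_uniform_def by blast
  define c where "c = max c0 0"
  have c0: "0 \<le> c" "c0 \<le> c" by (auto simp: c_def)
  have ce0: "0 \<le> c *\<^sub>R e" by (rule scaleR_nonneg_nonneg[OF c0(1) e0])
  have gc: "is_sup_of {T (band_proj (rpos (rabs (f \<alpha>) - c *\<^sub>R e)) (rabs (f \<alpha>))) | \<alpha>. \<alpha> \<in> \<Lambda>} (g c)"
    using g c0 by blast
  have bound: "0 \<le> T (rabs (f \<alpha>)) \<and> T (rabs (f \<alpha>)) \<le> g c + c *\<^sub>R e" if a: "\<alpha> \<in> \<Lambda>" for \<alpha>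
  proof -
    define x where "x = rabs (f \<alpha>)"
    define u where "u = rpos (x - c *\<^sub>R e)"
    define p where "p = band_proj u x"
    define q where "q = x - p"
    have x0: "0 \<le> x" by (simp add: x_def rabs_nonneg)
    have u0: "0 \<le> u" by (simp add: u_def rpos_def)
    note P = band_proj_props[OF x0 u0, folded p_def]
    have uband: "u \<in> band_gen u" by (auto simp: band_gen_def disj_sym)
    have qu: "rdisjoint q u" using P(2) uband by (simp add: q_def)
    have q0: "0 \<le> q" and qx: "q \<le> x" using P by (auto simp: q_def)
    define v where "v = rpos (q - c *\<^sub>R e)"
    have "v \<le> u" unfolding v_def u_def rpos_def using qx
      by (auto intro: le_supI1 diff_right_mono)
    moreover have "v \<le> q" unfolding v_def rpos_def using q0 ce0 by auto
    ultimately have "v \<le> inf (rabs q) (rabs u)" by (simp add: rabs_id q0 u0)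
    then have "v \<le> 0" using qu unfolding rdisjoint_def by (metis le_inf_iff)
    then have qce: "q \<le> c *\<^sub>R e" unfolding v_def rpos_def by simp
    have "0 \<le> T (c *\<^sub>R e - q)" using qce by (intro pos) simp
    then have Tq: "T q \<le> c *\<^sub>R e"
      using assms(3) by (simp add: linear_diff[OF lin] linear_scale[OF lin])
    have Tp: "T p \<le> g c" using gc a unfolding is_sup_of_def p_def u_def x_def by blast
    have "T x = T p + T q" by (simp add: q_def linear_diff[OF lin])
    then have "T x \<le> g c + c *\<^sub>R e" using Tp Tq by (simp add: add_mono)
    then show ?thesis using pos[OF x0] by (simp add: x_def)
  qed
  show ?thesis unfolding order_bounded_def using bound by blast
qed

end
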